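(* Let $\mathbb P\in\mathcal P^o$, let $x^\star(\mathbb P)\in\arg\min\{\mathrm{Var}_{\mathbb P}(\ell(x,\xi)):x\in\arg\min_{x'\in\mathcal X}c(x',\mathbb P)\}$ be a minimizer of $c(\cdot,\mathbb P)$ of lowest variance, and for each $T$ let $\hat x^{\mathrm V}_T(\mathbb P)\in\arg\min_{x\in\mathcal X}\hat c_{\mathrm V}(x,\mathbb P,T)$ and $\hat c_{\mathrm V}^\star(\mathbb P,T)=\min_{x\in\mathcal X}\hat c_{\mathrm V}(x,\mathbb P,T)$. Then for all $T\in\mathbb N$, $$|\hat c_{\mathrm V}^\star(\mathbb P,T)-c^\star(\mathbb P)|\le\sqrt{\tfrac{2a_T}{T}\mathrm{Var}_{\mathbb P}(\ell(x^\star(\mathbb P),\xi))}.$$ If moreover $a_T/T\to0$, then $\hat c_{\mathrm V}^\star(\mathbb P,T)-c^\star(\mathbb P)=\sqrt{\frac{2a_T}{T}\mathrm{Var}_{\mathbb P}(\ell(x^\star(\mathbb P),\xi))}+o\big(\sqrt{a_T/T}\big)$ and $\mathrm{Var}_{\mathbb P}(\ell(\hat x^{\mathrm V}_T(\mathbb P),\xi))\to\mathrm{Var}_{\mathbb P}(\ell(x^\star(\mathbb P),\xi))$ as $T\to\infty$.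
   Context: $\Sigma=\{1,\dots,d\}$ finite, $\mathcal P$ the probability simplex and $\mathcal P^o$ its relative interior. $\mathcal X\subset\mathbb R^n$ compact, $\ell:\mathcal X\times\Sigma\to\mathbb R$ continuous in $x$. $c(x,\mathbb P)=\sum_i\ell(x,i)\mathbb P(i)$, $c^\star(\mathbb P)=\min_{x\in\mathcal X}c(x,\mathbb P)$, $\mathrm{Var}_{\mathbb P}(\ell(x,\xi))=\sum_i\mathbb P(i)(\ell(x,i)-c(x,\mathbb P))^2$. $(a_T)$ is a sequence of positive reals. SVP predictor: $\hat c_{\mathrm V}(x,\mathbb P,T)=c(x,\mathbb P)+\sqrt{\frac{2a_T}{T}\mathrm{Var}_{\mathbb P}(\ell(x,\xi))}$. *)

theory Defs
  imports "HOL-Analysis.Analysis" "HOL-Library.Landau_Symbols"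
begin

text \<open>Outcome space \<open>\<Sigma> = {1..d}\<close>; distributions are functions \<open>nat \<Rightarrow> real\<close>.\<close>

definition simplex_interior :: "nat \<Rightarrow> (nat \<Rightarrow> real) set" where
  "simplex_interior d = {P. (\<forall>i\<in>{1..d}. P i > 0) \<and> (\<Sum>i=1..d. P i) = 1}"

definition cost :: "nat \<Rightarrow> ('a \<Rightarrow> nat \<Rightarrow> real) \<Rightarrow> 'a \<Rightarrow> (nat \<Rightarrow> real) \<Rightarrow> real" where
  "cost d l x P = (\<Sum>i=1..d. l x i * P i)"

definition opt_cost :: "nat \<Rightarrow> 'a set \<Rightarrow> ('a \<Rightarrow> nat \<Rightarrow> real) \<Rightarrow> (nat \<Rightarrow> real) \<Rightarrow> real" where
  "opt_cost d X l P = (INF x\<in>X. cost d l x P)"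

definition var_loss :: "nat \<Rightarrow> ('a \<Rightarrow> nat \<Rightarrow> real) \<Rightarrow> 'a \<Rightarrow> (nat \<Rightarrow> real) \<Rightarrow> real" where
  "var_loss d l x P = (\<Sum>i=1..d. P i * (l x i - cost d l x P)^2)"

definition svp :: "nat \<Rightarrow> ('a \<Rightarrow> nat \<Rightarrow> real) \<Rightarrow> (nat \<Rightarrow> real) \<Rightarrow> 'a \<Rightarrow> (nat \<Rightarrow> real) \<Rightarrow> nat \<Rightarrow> real" where
  "svp d l a x P T = cost d l x P + sqrt (2 * a T / real T * var_loss d l x P)"

definition svp_opt :: "nat \<Rightarrow> 'a set \<Rightarrow> ('a \<Rightarrow> nat \<Rightarrow> real) \<Rightarrow> (nat \<Rightarrow> real) \<Rightarrow> (nat \<Rightarrow> real) \<Rightarrow> nat \<Rightarrow> real" where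
  "svp_opt d X l a P T = (INF x\<in>X. svp d l a x P T)"

end

theory Submission
  imports Defs
begin

theorem mainTheorem16:
  fixes d :: nat and X :: "'n::euclidean_space set" and l :: "'n \<Rightarrow> nat \<Rightarrow> real"
    and a :: "nat \<Rightarrow> real" and P :: "nat \<Rightarrow> real"
    and xstar :: 'n and xhat :: "nat \<Rightarrow> 'n"
  assumes d: "d \<ge> 1"
    and X: "compact X" "X \<noteq> {}"
    and lcont: "\<And>i. i \<in> {1..d} \<Longrightarrow> continuous_on X (\<lambda>x. l x i)"
    and apos: "\<And>T. a T > 0"
    and P: "P \<in> simplex_interior d"
    and xstar_in: "xstar \<in> X"
    and xstar_min: "\<And>x. x \<in> X \<Longrightarrow> cost d l xstar P \<le> cost d l x P"
    and xstar_var: "\<And>x. x \<in> X \<Longrightarrow> (\<forall>y\<in>X. cost d l x P \<le> cost d l y P)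
                      \<Longrightarrow> var_loss d l xstar P \<le> var_loss d l x P"
    and xhat_in: "\<And>T. xhat T \<in> X"
    and xhat_min: "\<And>T x. x \<in> X \<Longrightarrow> svp d l a (xhat T) P T \<le> svp d l a x P T"
  shows "(\<forall>T::nat. T \<ge> 1 \<longrightarrow>
            \<bar>svp_opt d X l a P T - opt_cost d X l P\<bar>
              \<le> sqrt (2 * a T / real T * var_loss d l xstar P))
       \<and> ((\<lambda>T. a T / real T) \<longlonglongrightarrow> 0 \<longrightarrow>
            (\<lambda>T. svp_opt d X l a P T - opt_cost d X l P
                   - sqrt (2 * a T / real T * var_loss d l xstar P))
              \<in> o(\<lambda>T. sqrt (a T / real T))
          \<and> (\<lambda>T. var_loss d l (xhat T) P) \<longlonglongrightarrow> var_loss d l xstar P)"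
proof -
  define c where "c = (\<lambda>x. cost d l x P)"
  define v where "v = (\<lambda>x. var_loss d l x P)"
  define s where "s = (\<lambda>T. 2 * a T / real T)"
  have Ppos: "\<And>i. i \<in> {1..d} \<Longrightarrow> P i > 0" using P by (auto simp: simplex_interior_def)
  have vnn: "\<And>x. v x \<ge> 0" unfolding v_def var_loss_def
    by (intro sum_nonneg) (auto intro!: mult_nonneg_nonneg less_imp_le[OF Ppos])
  have sapp: "\<And>T. 2 * a T / real T = s T" by (simp add: s_def)
  have vapp: "\<And>x. var_loss d l x P = v x" by (simp add: v_def)
  have snn: "\<And>T. s T \<ge> 0" unfolding s_def using apos by (simp add: less_imp_le)
  have spos: "\<And>T. T \<ge> 1 \<Longrightarrow> s T > 0" unfolding s_def using apos by simp
  have svp_eq: "\<And>x T. svp d l a x P T = c x + sqrt (s T * v x)"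
    by (simp add: svp_def c_def v_def s_def)
  have copt: "opt_cost d X l P = c xstar"
    unfolding opt_cost_def c_def
    by (rule cInf_eq_minimum) (use xstar_in xstar_min in auto)
  have sopt: "\<And>T. svp_opt d X l a P T = c (xhat T) + sqrt (s T * v (xhat T))"
    unfolding svp_opt_def
    by (rule cInf_eq_minimum) (use xhat_in xhat_min svp_eq in auto)
  have chat: "\<And>T. c xstar \<le> c (xhat T)" using xstar_min xhat_in c_def by auto
  have hmin: "\<And>T. c (xhat T) + sqrt (s T * v (xhat T)) \<le> c xstar + sqrt (s T * v xstar)"
    using xhat_min[OF xstar_in] svp_eq by auto
  have vle: "\<And>T. T \<ge> 1 \<Longrightarrow> v (xhat T) \<le> v xstar"
  proof -
    fix T :: nat assume T: "T \<ge> 1"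
    have "sqrt (s T * v (xhat T)) \<le> sqrt (s T * v xstar)" using hmin[of T] chat[of T] by linarith
    hence "s T * v (xhat T) \<le> s T * v xstar" by simp
    thus "v (xhat T) \<le> v xstar" using spos[OF T] by simp
  qed
  have part1: "\<forall>T::nat. T \<ge> 1 \<longrightarrow>
            \<bar>svp_opt d X l a P T - opt_cost d X l P\<bar>
              \<le> sqrt (2 * a T / real T * var_loss d l xstar P)"
  proof (intro allI impI)
    fix T :: nat assume "T \<ge> 1"
    have "0 \<le> sqrt (s T * v (xhat T))" using snn vnn by simp
    then show "\<bar>svp_opt d X l a P T - opt_cost d X l P\<bar>
              \<le> sqrt (2 * a T / real T * var_loss d l xstar P)"
      using hmin[of T] chat[of T] unfolding sopt copt sapp vapp by linarith
  qed
  show ?thesis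
  proof (intro conjI impI part1)
    assume lim: "(\<lambda>T. a T / real T) \<longlonglongrightarrow> 0"
    have slim: "s \<longlonglongrightarrow> 0"
    proof -
      have "(\<lambda>T. 2 * (a T / real T)) \<longlonglongrightarrow> 2 * 0" by (intro tendsto_intros lim)
      thus ?thesis unfolding s_def by simp
    qed
    have sqlim: "(\<lambda>T. sqrt (s T * v xstar)) \<longlonglongrightarrow> 0"
      using tendsto_real_sqrt[OF tendsto_mult[OF slim tendsto_const[of "v xstar"]]] by simp
    have cbound: "\<And>T. c (xhat T) - c xstar \<le> sqrt (s T * v xstar)"
      using hmin snn vnn by (smt (verit) real_sqrt_ge_zero mult_nonneg_nonneg)
    have ccont: "continuous_on X c" unfolding c_def cost_def
      by (intro continuous_intros lcont) auto
    have vcont: "continuous_on X v" unfolding v_def var_loss_def cost_def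
      by (intro continuous_intros lcont) auto
    have vlim: "(\<lambda>T. v (xhat T)) \<longlonglongrightarrow> v xstar"
    proof (rule tendstoI)
      fix e :: real assume e: "e > 0"
      define K where "K = X \<inter> v -` {..v xstar - e}"
      have "closed K" unfolding K_def
        by (rule continuous_closed_preimage[OF vcont compact_imp_closed[OF X(1)]]) simp
      hence Kc: "compact K" using compact_Int_closed[OF X(1)] K_def
        by (metis Int_absorb1 Int_lower1)
      have evK: "eventually (\<lambda>T. xhat T \<notin> K) sequentially"
      proof (cases "K = {}")
        case True then show ?thesis by simp
      next
        case False
        have "continuous_on K c" using ccont K_def continuous_on_subset by blast
        then obtain k where k: "k \<in> K" "\<And>t. t \<in> K \<Longrightarrow> c k \<le> c t"
          using continuous_attains_inf[OF Kc False] by blast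
        have "c k > c xstar"
        proof (rule ccontr)
          assume "\<not> c k > c xstar"
          hence "c k = c xstar" using xstar_min k(1) K_def c_def by force
          hence "\<forall>y\<in>X. c k \<le> c y" using xstar_min c_def by auto
          hence "v xstar \<le> v k" using xstar_var k(1) K_def c_def v_def by auto
          thus False using k(1) K_def e by auto
        qed
        then have "eventually (\<lambda>T. sqrt (s T * v xstar) < c k - c xstar) sequentially"
          using order_tendstoD(2)[OF sqlim] by auto
        then show ?thesis
        proof (rule eventually_mono)
          fix T assume "sqrt (s T * v xstar) < c k - c xstar"
          then have "c (xhat T) < c k" using cbound[of T] by linarith
          then show "xhat T \<notin> K" using k(2) by force
        qed
      qed
      show "eventually (\<lambda>T. dist (v (xhat T)) (v xstar) < e) sequentially"
        using evK eventually_ge_at_top[of 1]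
      proof eventually_elim
        case (elim T)
        then have "v (xhat T) > v xstar - e" using xhat_in[of T] K_def by auto
        then show ?case using vle[OF elim(2)] e by (simp add: dist_real_def)
      qed
    qed
    show "(\<lambda>T. var_loss d l (xhat T) P) \<longlonglongrightarrow> var_loss d l xstar P" using vlim by (simp add: v_def)
    show "(\<lambda>T. svp_opt d X l a P T - opt_cost d X l P
                   - sqrt (2 * a T / real T * var_loss d l xstar P))
              \<in> o(\<lambda>T. sqrt (a T / real T))"
    proof (rule smalloI_tendsto)
      show "eventually (\<lambda>T. sqrt (a T / real T) \<noteq> 0) sequentially"
        using eventually_ge_at_top[of 1] by eventually_elim (metis apos less_numeral_extra(3) of_nat_0_less_iff order_less_le_trans zero_less_one divide_pos_pos real_sqrt_gt_0_iff)
      have sqv: "(\<lambda>T. sqrt 2 * (sqrt (v (xhat T)) - sqrt (v xstar))) \<longlonglongrightarrow> 0"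
        using tendsto_mult[OF tendsto_const[of "sqrt 2"] tendsto_diff[OF tendsto_real_sqrt[OF vlim] tendsto_const[of "sqrt (v xstar)"]]] by simp
      show "(\<lambda>T. (svp_opt d X l a P T - opt_cost d X l P
                   - sqrt (2 * a T / real T * var_loss d l xstar P)) / sqrt (a T / real T)) \<longlonglongrightarrow> 0"
      proof (rule tendsto_sandwich[OF _ _ sqv tendsto_const])
        show "eventually (\<lambda>T. (svp_opt d X l a P T - opt_cost d X l P
                   - sqrt (2 * a T / real T * var_loss d l xstar P)) / sqrt (a T / real T) \<le> 0) sequentially"
        proof (rule always_eventually, rule allI)
          fix T
          have "svp_opt d X l a P T - opt_cost d X l P
                   - sqrt (2 * a T / real T * var_loss d l xstar P) \<le> 0"
            using hmin[of T] unfolding sopt copt sapp vapp by linarith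
          then show "(svp_opt d X l a P T - opt_cost d X l P
                   - sqrt (2 * a T / real T * var_loss d l xstar P)) / sqrt (a T / real T) \<le> 0"
            using apos[of T] by (intro divide_nonpos_nonneg) (auto simp: less_imp_le)
        qed
        show "eventually (\<lambda>T. sqrt 2 * (sqrt (v (xhat T)) - sqrt (v xstar)) \<le> (svp_opt d X l a P T - opt_cost d X l P
                   - sqrt (2 * a T / real T * var_loss d l xstar P)) / sqrt (a T / real T)) sequentially"
          using eventually_ge_at_top[of 1]
        proof eventually_elim
          case (elim T)
          define r where "r = a T / real T"
          have r: "r > 0" using apos elim by (simp add: r_def)
          have sr: "s T = 2 * r" by (simp add: s_def r_def)
          have "svp_opt d X l a P T - opt_cost d X l P
                   - sqrt (2 * a T / real T * var_loss d l xstar P)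
                = (c (xhat T) - c xstar) + sqrt 2 * sqrt r * (sqrt (v (xhat T)) - sqrt (v xstar))"
            unfolding sopt copt sapp vapp sr
            by (simp add: real_sqrt_mult algebra_simps)
          also have "\<dots> \<ge> sqrt 2 * sqrt r * (sqrt (v (xhat T)) - sqrt (v xstar))"
            using chat[of T] by simp
          finally have "sqrt r * (sqrt 2 * (sqrt (v (xhat T)) - sqrt (v xstar))) \<le> svp_opt d X l a P T - opt_cost d X l P
                   - sqrt (2 * a T / real T * var_loss d l xstar P)" by (simp add: algebra_simps)
          then show ?case using r unfolding r_def[symmetric]
            by (simp add: pos_le_divide_eq mult.commute)
        qed
      qed
    qed
  qed
qed

end
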